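(* If $M\in\mathrm{PGL}_2(\mathbb{Q})$ is such that $MAM^{-1}\in\mathrm{PSL}_2(\mathbb{Z})$ for every $A\in\Gamma^3$, then $M\in\mathrm{PSL}_2(\mathbb{Z})\cup\mathrm{PSL}_2(\mathbb{Z})J$, where $J=\left(\begin{smallmatrix}-1&0\\0&1\end{smallmatrix}\right)$.
   Context: $\Gamma^3=\{\left(\begin{smallmatrix}a&b\\c&d\end{smallmatrix}\right)\in\mathrm{PSL}_2(\mathbb{Z}) : ab+cd\equiv0\bmod3\}$. Elements of $\mathrm{PGL}_2(\mathbb{Q})$ are invertible rational $2\times2$ matrices modulo nonzero scalars. *)

theory Defs
  imports "HOL-Analysis.Analysis"
begin

text \<open>2x2 rational matrices are represented by the type rat^2^2.
  An element of PGL_2(Q) is represented by an invertible matrix; its class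
  consists of all nonzero scalar multiples.\<close>

definition smul_mat :: "rat \<Rightarrow> rat^2^2 \<Rightarrow> rat^2^2" where
  "smul_mat c M = (\<chi> i j. c * M$i$j)"

definition int_mat :: "rat^2^2 \<Rightarrow> bool" where
  "int_mat M \<longleftrightarrow> (\<forall>i j. M$i$j \<in> \<int>)"

definition in_SL2Z :: "rat^2^2 \<Rightarrow> bool" where
  "in_SL2Z M \<longleftrightarrow> int_mat M \<and> det M = 1"

definition in_PSL2Z :: "rat^2^2 \<Rightarrow> bool" where
  "in_PSL2Z M \<longleftrightarrow> (\<exists>c. c \<noteq> 0 \<and> in_SL2Z (smul_mat c M))"

text \<open>Gamma^3: elements (a b; c d) of PSL_2(Z) with ab + cd = 0 mod 3
  (condition invariant under sign, so checked on an SL_2(Z) representative).\<close>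
definition in_Gamma3 :: "rat^2^2 \<Rightarrow> bool" where
  "in_Gamma3 A \<longleftrightarrow> in_PSL2Z A \<and>
     (\<exists>c. c \<noteq> 0 \<and> in_SL2Z (smul_mat c A) \<and>
        (let B = smul_mat c A in
          (\<exists>k::int. B$1$1 * B$1$2 + B$2$1 * B$2$2 = 3 * of_int k)))"

definition J :: "rat^2^2" where
  "J = (\<chi> i j. if i = j then (if i = 1 then -1 else 1) else 0)"

end

theory Submission
  imports Defs
begin

definition mk :: "rat \<Rightarrow> rat \<Rightarrow> rat \<Rightarrow> rat \<Rightarrow> rat^2^2" where
  "mk a b c d = (\<chi> i j. if i = 1 then (if j = 1 then a else b) else (if j = 1 then c else d))"

lemma mk_nth[simp]: "mk a b c d $ 1 $ 1 = a" "mk a b c d $ 1 $ 2 = b"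
   "mk a b c d $ 2 $ 1 = c" "mk a b c d $ 2 $ 2 = d"
  by (simp_all add: mk_def)

lemma mk_eq: "M = mk (M$1$1) (M$1$2) (M$2$1) (M$2$2)"
  by (simp add: vec_eq_iff forall_2)

lemma mk_mult: "mk a b c d ** mk e f g h = mk (a*e+b*g) (a*f+b*h) (c*e+d*g) (c*f+d*h)"
  by (simp add: vec_eq_iff forall_2 matrix_matrix_mult_def sum_2)

lemma det_mk: "det (mk a b c d) = a*d - b*c"
  by (simp add: det_2)

lemma mat1_mk: "(mat 1 :: rat^2^2) = mk 1 0 0 1"
  by (simp add: vec_eq_iff forall_2 mat_def)

lemma smul_mk: "smul_mat x (mk a b c d) = mk (x*a) (x*b) (x*c) (x*d)"
  by (simp add: vec_eq_iff forall_2 smul_mat_def)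

lemma int_mat_mk: "int_mat (mk a b c d) \<longleftrightarrow> a \<in> \<int> \<and> b \<in> \<int> \<and> c \<in> \<int> \<and> d \<in> \<int>"
  by (simp add: int_mat_def forall_2)

lemma J_mk: "J = mk (-1) 0 0 1"
  by (simp add: vec_eq_iff forall_2 J_def)

lemma mk_cong: "a=a' \<Longrightarrow> b=b' \<Longrightarrow> c=c' \<Longrightarrow> d=d' \<Longrightarrow> mk a b c d = mk a' b' c' d'" by simp

lemma inv_mk:
  assumes e: "e = a*d - b*c" and "e \<noteq> 0"
  shows "matrix_inv (mk a b c d) = mk (d/e) (-b/e) (-c/e) (a/e)"
proof -
  let ?B = "mk (d/e) (-b/e) (-c/e) (a/e)"
  have 1: "mk a b c d ** ?B = mat 1" unfolding mk_mult mat1_mk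
    by (rule mk_cong) (use assms in \<open>simp_all add: field_simps\<close>)
  have 2: "?B ** mk a b c d = mat 1" unfolding mk_mult mat1_mk
    by (rule mk_cong) (use assms in \<open>simp_all add: field_simps\<close>)
  have "matrix_inv (mk a b c d) ** mk a b c d = mat 1"
    unfolding matrix_inv_def by (rule someI2_ex) (use 1 2 in auto)
  then have "matrix_inv (mk a b c d) = matrix_inv (mk a b c d) ** (mk a b c d ** ?B)"
    using 1 by (simp add: matrix_mul_rid)
  also have "\<dots> = ?B" using \<open>matrix_inv (mk a b c d) ** mk a b c d = mat 1\<close>
    by (simp add: matrix_mul_assoc matrix_mul_lid)
  finally show ?thesis .
qed

lemma conj_int:
  assumes "in_PSL2Z X" "det X = 1" shows "int_mat X"
proof -
  obtain c where c: "c \<noteq> 0" "in_SL2Z (smul_mat c X)" using assms(1) in_PSL2Z_def by blast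
  have "det (smul_mat c X) = c^2 * det X"
    by (simp add: det_2 smul_mat_def power2_eq_square algebra_simps)
  then have "c^2 = 1" using c(2) assms(2) in_SL2Z_def by simp
  then have cc: "c*c = 1" by (simp add: power2_eq_square)
  have "X$i$j \<in> \<int>" for i j
  proof -
    have "(smul_mat c X)$i$j \<in> \<int>" using c(2) in_SL2Z_def int_mat_def by blast
    then have "c * (smul_mat c X)$i$j \<in> \<int>" using \<open>c^2=1\<close>
      by (metis Ints_minus Ints_mult Ints_1 power2_eq_1_iff mult_minus_left mult_1)
    moreover have "c * (smul_mat c X)$i$j = X$i$j" using cc by (simp add: smul_mat_def mult.assoc[symmetric])
    ultimately show ?thesis by simp
  qed
  then show ?thesis by (simp add: int_mat_def)
qed

lemma gamma_mk:
  assumes "a \<in> \<int>" "b \<in> \<int>" "c \<in> \<int>" "d \<in> \<int>" "a*d - b*c = 1" "a*b+c*d = 3 * of_int k"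
  shows "in_Gamma3 (mk a b c d)"
proof -
  have s: "in_SL2Z (smul_mat 1 (mk a b c d))" using assms
    by (simp add: smul_mk in_SL2Z_def int_mat_mk det_mk)
  have p: "in_PSL2Z (mk a b c d)" unfolding in_PSL2Z_def using s by (intro exI[of _ "1::rat"]) simp
  show ?thesis unfolding in_Gamma3_def Let_def
    apply (rule conjI[OF p])
    apply (rule exI[of _ 1])
    using s assms(6) by (auto simp: smul_mk)
qed

lemma den_exists: fixes x :: rat shows "\<exists>d::int. d > 0 \<and> of_int d * x \<in> \<int>"
proof -
  obtain n d where nd: "quotient_of x = (n, d)" by (cases "quotient_of x")
  have "d > 0" using nd quotient_of_denom_pos by blast
  moreover have "x = of_int n / of_int d" using nd quotient_of_div by blast
  ultimately have "of_int d * x = of_int n" by simp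
  then show ?thesis using \<open>d>0\<close> by (metis Ints_of_int)
qed

lemma sq_expand: fixes a1 a2 a3 a4 x1 x2 x3 x4 d :: rat
  shows "(a1*x1 + a2*x2 + a3*x3 + a4*x4)^2/d = a1*a1*(x1*x1/d) + a2*a2*(x2*x2/d) + a3*a3*(x3*x3/d) + a4*a4*(x4*x4/d)
      + 2*a1*a2*(x1*x2/d) + 2*a1*a3*(x1*x3/d) + 2*a1*a4*(x1*x4/d)
      + 2*a2*a3*(x2*x3/d) + 2*a2*a4*(x2*x4/d) + 2*a3*a4*(x3*x4/d)"
proof -
  have "(a1*x1 + a2*x2 + a3*x3 + a4*x4)^2 = a1*a1*(x1*x1) + a2*a2*(x2*x2) + a3*a3*(x3*x3) + a4*a4*(x4*x4)
      + 2*a1*a2*(x1*x2) + 2*a1*a3*(x1*x3) + 2*a1*a4*(x1*x4)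
      + 2*a2*a3*(x2*x3) + 2*a2*a4*(x2*x4) + 2*a3*a4*(x3*x4)" by algebra
  then show ?thesis by (simp add: add_divide_distrib times_divide_eq_right)
qed

lemma final_arith:
  fixes p q r t e :: rat
  assumes e: "e = p*t - q*r" "e \<noteq> 0"
    and h: "p*p/e \<in> \<int>" "p*q/e \<in> \<int>" "p*r/e \<in> \<int>" "p*t/e \<in> \<int>" "q*q/e \<in> \<int>"
       "q*r/e \<in> \<int>" "q*t/e \<in> \<int>" "r*r/e \<in> \<int>" "r*t/e \<in> \<int>" "t*t/e \<in> \<int>"
  shows "\<exists>c. c \<noteq> 0 \<and> c*p \<in> \<int> \<and> c*q \<in> \<int> \<and> c*r \<in> \<int> \<and> c*t \<in> \<int> \<and> (c*c*e = 1 \<or> c*c*e = -1)"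
proof -
  obtain d1 d2 d3 d4 :: int where d: "d1 > 0" "of_int d1 * p \<in> \<int>" "d2 > 0" "of_int d2 * q \<in> \<int>"
    "d3 > 0" "of_int d3 * r \<in> \<int>" "d4 > 0" "of_int d4 * t \<in> \<int>"
    using den_exists by meson
  define D where "D = d1*d2*d3*d4"
  have Dpos: "D > 0" using d by (simp add: D_def)
  have "of_int D * p = of_int (d2*d3*d4) * (of_int d1 * p)" by (simp add: D_def algebra_simps)
  then have "of_int D * p \<in> \<int>" using d by (metis Ints_mult Ints_of_int)
  then obtain N1 where N1: "of_int D * p = of_int N1" by (metis Ints_cases)
  have "of_int D * q = of_int (d1*d3*d4) * (of_int d2 * q)" by (simp add: D_def algebra_simps)
  then have "of_int D * q \<in> \<int>" using d by (metis Ints_mult Ints_of_int)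
  then obtain N2 where N2: "of_int D * q = of_int N2" by (metis Ints_cases)
  have "of_int D * r = of_int (d1*d2*d4) * (of_int d3 * r)" by (simp add: D_def algebra_simps)
  then have "of_int D * r \<in> \<int>" using d by (metis Ints_mult Ints_of_int)
  then obtain N3 where N3: "of_int D * r = of_int N3" by (metis Ints_cases)
  have "of_int D * t = of_int (d1*d2*d3) * (of_int d4 * t)" by (simp add: D_def algebra_simps)
  then have "of_int D * t \<in> \<int>" using d by (metis Ints_mult Ints_of_int)
  then obtain N4 where N4: "of_int D * t = of_int N4" by (metis Ints_cases)
  obtain u1 u2 where u12: "u1 * N1 + u2 * N2 = gcd N1 N2" using bezout_int by blast
  obtain u3 u4 where u34: "u3 * N3 + u4 * N4 = gcd N3 N4" using bezout_int by blast
  obtain v1 v2 where v: "v1 * gcd N1 N2 + v2 * gcd N3 N4 = gcd (gcd N1 N2) (gcd N3 N4)" using bezout_int by blast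
  define g where "g = gcd (gcd N1 N2) (gcd N3 N4)"
  have gsum: "g = (v1*u1) * N1 + (v1*u2) * N2 + (v2*u3)*N3 + (v2*u4)*N4"
  proof -
    have "g = v1 * gcd N1 N2 + v2 * gcd N3 N4" using v g_def by simp
    also have "\<dots> = v1 * (u1 * N1 + u2 * N2) + v2 * (u3 * N3 + u4 * N4)" by (simp only: u12 u34)
    finally show ?thesis by (simp add: algebra_simps)
  qed
  have gd: "g dvd N1" "g dvd N2" "g dvd N3" "g dvd N4" unfolding g_def
    by (meson dvd_trans gcd_dvd1 gcd_dvd2)+
  have g0: "g \<noteq> 0"
  proof
    assume "g = 0"
    then have "N1 = 0" "N2 = 0" "N3 = 0" "N4 = 0" using gd by auto
    then have "p = 0" "q = 0" using N1 N2 Dpos by auto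
    then show False using e by simp
  qed
  obtain m1 m2 m3 m4 where m: "N1 = g*m1" "N2 = g*m2" "N3 = g*m3" "N4 = g*m4"
    using gd by (metis dvdE)
  have one: "(v1*u1) * m1 + (v1*u2) * m2 + (v2*u3)*m3 + (v2*u4)*m4 = 1"
  proof -
    have "g * ((v1*u1) * m1 + (v1*u2) * m2 + (v2*u3)*m3 + (v2*u4)*m4) = g * 1"
      using gsum m by (simp add: algebra_simps)
    then show ?thesis using g0 by simp
  qed
  define c :: rat where "c = of_int D / of_int g"
  have c0: "c \<noteq> 0" using g0 Dpos by (simp add: c_def)
  have cp: "c*p = of_int m1" using N1 m(1) g0 by (simp add: c_def field_simps)
  have cq: "c*q = of_int m2" using N2 m(2) g0 by (simp add: c_def field_simps)
  have cr: "c*r = of_int m3" using N3 m(3) g0 by (simp add: c_def field_simps)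
  have ct: "c*t = of_int m4" using N4 m(4) g0 by (simp add: c_def field_simps)
  define \<delta> where "\<delta> = c*c*e"
  have \<delta>0: "\<delta> \<noteq> 0" using c0 e by (simp add: \<delta>_def)
  have \<delta>int: "\<delta> = of_int (m1*m4 - m2*m3)"
  proof -
    have "\<delta> = (c*p)*(c*t) - (c*q)*(c*r)" unfolding \<delta>_def e(1) by (simp add: algebra_simps)
    then show ?thesis using cp cq cr ct by simp
  qed
  have tr: "x*y/e = (c*x)*(c*y)/\<delta>" for x y using c0 e(2) by (simp add: \<delta>_def field_simps)
  have H: "of_int m1 * of_int m1 / \<delta> \<in> \<int>" "of_int m1 * of_int m2 / \<delta> \<in> \<int>" "of_int m1 * of_int m3 / \<delta> \<in> \<int>"
     "of_int m1 * of_int m4 / \<delta> \<in> \<int>" "of_int m2 * of_int m2 / \<delta> \<in> \<int>" "of_int m2 * of_int m3 / \<delta> \<in> \<int>"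
     "of_int m2 * of_int m4 / \<delta> \<in> \<int>" "of_int m3 * of_int m3 / \<delta> \<in> \<int>" "of_int m3 * of_int m4 / \<delta> \<in> \<int>"
     "of_int m4 * of_int m4 / \<delta> \<in> \<int>"
    using h unfolding tr cp cq cr ct by simp_all
  define a1 where "a1 = (of_int (v1*u1) :: rat)"
  define a2 where "a2 = (of_int (v1*u2) :: rat)"
  define a3 where "a3 = (of_int (v2*u3) :: rat)"
  define a4 where "a4 = (of_int (v2*u4) :: rat)"
  define x1 where "x1 = (of_int m1 :: rat)"
  define x2 where "x2 = (of_int m2 :: rat)"
  define x3 where "x3 = (of_int m3 :: rat)"
  define x4 where "x4 = (of_int m4 :: rat)"
  have one': "a1*x1 + a2*x2 + a3*x3 + a4*x4 = 1"
    unfolding a1_def a2_def a3_def a4_def x1_def x2_def x3_def x4_def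
    using arg_cong[OF one, of "of_int :: int \<Rightarrow> rat"] by simp
  have "1/\<delta> = (a1*x1 + a2*x2 + a3*x3 + a4*x4)^2/\<delta>" using one' by simp
  also have "\<dots> = a1*a1*(x1*x1/\<delta>) + a2*a2*(x2*x2/\<delta>) + a3*a3*(x3*x3/\<delta>) + a4*a4*(x4*x4/\<delta>)
      + 2*a1*a2*(x1*x2/\<delta>) + 2*a1*a3*(x1*x3/\<delta>) + 2*a1*a4*(x1*x4/\<delta>)
      + 2*a2*a3*(x2*x3/\<delta>) + 2*a2*a4*(x2*x4/\<delta>) + 2*a3*a4*(x3*x4/\<delta>)"
    by (rule sq_expand)
  also have "\<dots> \<in> \<int>"
    unfolding a1_def a2_def a3_def a4_def using H[folded x1_def x2_def x3_def x4_def]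
    by (intro Ints_add Ints_mult Ints_of_int; simp)
  finally have inv: "1/\<delta> \<in> \<int>" .
  then obtain l where l: "1/\<delta> = of_int l" by (metis Ints_cases)
  have "of_int ((m1*m4 - m2*m3) * l) = (1::rat)" using l \<delta>int \<delta>0 by (simp add: field_simps)
  then have "(m1*m4 - m2*m3) * l = 1" by (metis of_int_eq_1_iff)
  then have "m1*m4 - m2*m3 = 1 \<or> m1*m4 - m2*m3 = -1" using zmult_eq_1_iff by blast
  then have "\<delta> = 1 \<or> \<delta> = -1" unfolding \<delta>int by (metis of_int_1 of_int_minus)
  then show ?thesis using c0 cp cq cr ct unfolding \<delta>_def by (metis Ints_of_int)
qed

lemma conj_mk:
  assumes e: "e = p * t - q * r" "e \<noteq> 0"
    and h: "in_PSL2Z (mk p q r t ** mk a b c d ** matrix_inv (mk p q r t))" and dA: "a * d - b * c = 1"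
  shows "\<exists>E0 E1 E2 E3. E0 \<in> \<int> \<and> E1 \<in> \<int> \<and> E2 \<in> \<int> \<and> E3 \<in> \<int> \<and>
     E0 * e = (p * a + q * c) * t - (p * b + q * d) * r \<and>
     E1 * e = (p * b + q * d) * p - (p * a + q * c) * q \<and>
     E2 * e = (r * a + t * c) * t - (r * b + t * d) * r \<and>
     E3 * e = (r * b + t * d) * p - (r * a + t * c) * q"
proof -
  have inv: "matrix_inv (mk p q r t) = mk (t / e) (- q / e) (- r / e) (p / e)"
    using inv_mk[OF _ e(2), of p t q r] e(1) by simp
  define X where "X = mk p q r t ** mk a b c d ** matrix_inv (mk p q r t)"
  have X: "X = mk (((p * a + q * c) * t - (p * b + q * d) * r) / e)
     (((p * b + q * d) * p - (p * a + q * c) * q) / e)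
     (((r * a + t * c) * t - (r * b + t * d) * r) / e)
     (((r * b + t * d) * p - (r * a + t * c) * q) / e)"
    unfolding X_def inv mk_mult
    by (rule mk_cong) (simp_all add: diff_divide_distrib add_divide_distrib algebra_simps)
  have "det X = det (mk p q r t) * det (mk a b c d) * det (mk (t / e) (- q / e) (- r / e) (p / e))"
    unfolding X_def inv by (simp add: det_mul)
  also have "\<dots> = 1" unfolding det_mk using e(2) dA
    by (simp add: field_simps) (simp add: e(1) algebra_simps)
  finally have "int_mat X" using conj_int h X_def by blast
  then show ?thesis unfolding X int_mat_mk using e(2) by (metis nonzero_eq_divide_eq)
qed


theorem lemma3p2:
  fixes M :: "rat^2^2"
  assumes "invertible M"
    and "\<forall>A. in_Gamma3 A \<longrightarrow> in_PSL2Z (M ** A ** matrix_inv M)"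
  shows "in_PSL2Z M \<or> (\<exists>B. in_PSL2Z B \<and> (\<exists>c. c \<noteq> 0 \<and> M = smul_mat c (B ** J)))"
proof -
  define p where "p = M$1$1"
  define q where "q = M$1$2"
  define r where "r = M$2$1"
  define t where "t = M$2$2"
  have Meq: "M = mk p q r t" unfolding p_def q_def r_def t_def by (rule mk_eq)
  define e where "e = p * t - q * r"
  have e0: "e \<noteq> 0" using invertible_det_nz[of M] assms(1) unfolding Meq det_mk e_def by simp
  have hyp: "in_PSL2Z (mk p q r t ** A ** matrix_inv (mk p q r t))" if "in_Gamma3 A" for A
    using assms(2) that Meq by simp
  have g0: "in_Gamma3 (mk 0 (-1) 1 0)" by (rule gamma_mk[where k=0]) simp_all
  have g1: "in_Gamma3 (mk 1 1 1 2)" by (rule gamma_mk[where k=1]) simp_all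
  have g2: "in_Gamma3 (mk 2 1 1 1)" by (rule gamma_mk[where k=1]) simp_all
  have g3: "in_Gamma3 (mk 1 3 0 1)" by (rule gamma_mk[where k=1]) simp_all
  obtain E00 E01 E02 E03 where A0: "E00 \<in> \<int>" "E01 \<in> \<int>" "E02 \<in> \<int>" "E03 \<in> \<int>"
     "E00 * e = (p * 0 + q * 1) * t - (p * (-1) + q * 0) * r"
     "E01 * e = (p * (-1) + q * 0) * p - (p * 0 + q * 1) * q"
     "E02 * e = (r * 0 + t * 1) * t - (r * (-1) + t * 0) * r"
     "E03 * e = (r * (-1) + t * 0) * p - (r * 0 + t * 1) * q"
    using conj_mk[OF e_def e0 hyp[OF g0]] by simp blast
  obtain E10 E11 E12 E13 where A1: "E10 \<in> \<int>" "E11 \<in> \<int>" "E12 \<in> \<int>" "E13 \<in> \<int>"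
     "E10 * e = (p * 1 + q * 1) * t - (p * 1 + q * 2) * r"
     "E11 * e = (p * 1 + q * 2) * p - (p * 1 + q * 1) * q"
     "E12 * e = (r * 1 + t * 1) * t - (r * 1 + t * 2) * r"
     "E13 * e = (r * 1 + t * 2) * p - (r * 1 + t * 1) * q"
    using conj_mk[OF e_def e0 hyp[OF g1]] by simp blast
  obtain E20 E21 E22 E23 where A2: "E20 \<in> \<int>" "E21 \<in> \<int>" "E22 \<in> \<int>" "E23 \<in> \<int>"
     "E20 * e = (p * 2 + q * 1) * t - (p * 1 + q * 1) * r"
     "E21 * e = (p * 1 + q * 1) * p - (p * 2 + q * 1) * q"
     "E22 * e = (r * 2 + t * 1) * t - (r * 1 + t * 1) * r"
     "E23 * e = (r * 1 + t * 1) * p - (r * 2 + t * 1) * q"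
    using conj_mk[OF e_def e0 hyp[OF g2]] by simp blast
  obtain E30 E31 E32 E33 where A3: "E30 \<in> \<int>" "E31 \<in> \<int>" "E32 \<in> \<int>" "E33 \<in> \<int>"
     "E30 * e = (p * 1 + q * 0) * t - (p * 3 + q * 1) * r"
     "E31 * e = (p * 3 + q * 1) * p - (p * 1 + q * 0) * q"
     "E32 * e = (r * 1 + t * 0) * t - (r * 3 + t * 1) * r"
     "E33 * e = (r * 3 + t * 1) * p - (r * 1 + t * 0) * q"
    using conj_mk[OF e_def e0 hyp[OF g3]] by simp blast
  note EQ = A0(5-8) A1(5-8) A2(5-8) A3(5-8)
  note EI = A0(1-4) A1(1-4) A2(1-4) A3(1-4)

  have h0: "p * p / e \<in> \<int>"
  proof -
    have "p * p = ((-2) * E01 + (1) * E11 + (1) * E21 + (-1) * E31) * e" using EQ by algebra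
    then have "p * p / e = ((-2) * E01 + (1) * E11 + (1) * E21 + (-1) * E31)" using e0 by simp
    then show ?thesis using EI by simp
  qed
  have h1: "p * q / e \<in> \<int>"
  proof -
    have "p * q = ((3) * E01 + (-1) * E11 + (-2) * E21 + (2) * E31) * e" using EQ by algebra
    then have "p * q / e = ((3) * E01 + (-1) * E11 + (-2) * E21 + (2) * E31)" using e0 by simp
    then show ?thesis using EI by simp
  qed
  have h2: "p * r / e \<in> \<int>"
  proof -
    have "p * r = ((4) * E03 + (3) * E10 + (1) * E13 + (-2) * E23 + (-3) * E30) * e" using EQ by algebra
    then have "p * r / e = ((4) * E03 + (3) * E10 + (1) * E13 + (-2) * E23 + (-3) * E30)" using e0 by simp
    then show ?thesis using EI by simp
  qed
  have h3: "p * t / e \<in> \<int>"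
  proof -
    have "p * t = ((15) * E03 + (11) * E10 + (4) * E13 + (-8) * E23 + (-10) * E30) * e" using EQ by algebra
    then have "p * t / e = ((15) * E03 + (11) * E10 + (4) * E13 + (-8) * E23 + (-10) * E30)" using e0 by simp
    then show ?thesis using EI by simp
  qed
  have h4: "q * q / e \<in> \<int>"
  proof -
    have "q * q = ((1) * E01 + (-1) * E11 + (-1) * E21 + (1) * E31) * e" using EQ by algebra
    then have "q * q / e = ((1) * E01 + (-1) * E11 + (-1) * E21 + (1) * E31)" using e0 by simp
    then show ?thesis using EI by simp
  qed
  have h5: "q * r / e \<in> \<int>"
  proof -
    have "q * r = ((3) * E03 + (2) * E10 + (1) * E13 + (-2) * E23 + (-2) * E30) * e" using EQ by algebra
    then have "q * r / e = ((3) * E03 + (2) * E10 + (1) * E13 + (-2) * E23 + (-2) * E30)" using e0 by simp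
    then show ?thesis using EI by simp
  qed
  have h6: "q * t / e \<in> \<int>"
  proof -
    have "q * t = ((-5) * E03 + (-3) * E10 + (-1) * E13 + (2) * E23 + (3) * E30) * e" using EQ by algebra
    then have "q * t / e = ((-5) * E03 + (-3) * E10 + (-1) * E13 + (2) * E23 + (3) * E30)" using e0 by simp
    then show ?thesis using EI by simp
  qed
  have h7: "r * r / e \<in> \<int>"
  proof -
    have "r * r = ((2) * E02 + (-1) * E12 + (-1) * E22 + (1) * E32) * e" using EQ by algebra
    then have "r * r / e = ((2) * E02 + (-1) * E12 + (-1) * E22 + (1) * E32)" using e0 by simp
    then show ?thesis using EI by simp
  qed
  have h8: "r * t / e \<in> \<int>"
  proof -
    have "r * t = ((3) * E02 + (-2) * E12 + (-1) * E22 + (2) * E32) * e" using EQ by algebra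
    then have "r * t / e = ((3) * E02 + (-2) * E12 + (-1) * E22 + (2) * E32)" using e0 by simp
    then show ?thesis using EI by simp
  qed
  have h9: "t * t / e \<in> \<int>"
  proof -
    have "t * t = ((-1) * E02 + (1) * E12 + (1) * E22 + (-1) * E32) * e" using EQ by algebra
    then have "t * t / e = ((-1) * E02 + (1) * E12 + (1) * E22 + (-1) * E32)" using e0 by simp
    then show ?thesis using EI by simp
  qed
  obtain c where c: "c \<noteq> 0" "c * p \<in> \<int>" "c * q \<in> \<int>" "c * r \<in> \<int>" "c * t \<in> \<int>"
      "c * c * e = 1 \<or> c * c * e = -1"
    using final_arith[OF e_def e0 h0 h1 h2 h3 h4 h5 h6 h7 h8 h9] by blast
  show ?thesis
  proof (cases "c * c * e = 1")
    case True
    have "in_SL2Z (smul_mat c M)" unfolding Meq smul_mk in_SL2Z_def int_mat_mk det_mk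
      using c True by (simp add: e_def algebra_simps)
    then show ?thesis using c(1) in_PSL2Z_def by blast
  next
    case False
    then have m1: "c * c * e = -1" using c(6) by simp
    define B where "B = mk (- p) q (- r) t"
    have "in_SL2Z (smul_mat c B)" unfolding B_def smul_mk in_SL2Z_def int_mat_mk det_mk
      using c m1 by (simp add: e_def algebra_simps)
    then have "in_PSL2Z B" using c(1) in_PSL2Z_def by blast
    moreover have "M = smul_mat 1 (B ** J)" unfolding B_def J_mk mk_mult smul_mk Meq by simp
    ultimately show ?thesis by (metis one_neq_zero)
  qed
qed

end
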